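(* Let $g(\alpha,\beta,\gamma)=\gamma^{3/2}+\min\big(0.465,\frac{3\alpha\beta}{\alpha+\beta},3\alpha\sqrt\beta\big)$, where $\frac{\alpha\beta}{\alpha+\beta}:=0$ if $(\alpha,\beta)=(0,0)$, and $f(\alpha,\beta,\gamma,\delta)=\min\big(2\delta^{3/2}+g(\alpha,\beta,\gamma),\tfrac14+\tfrac34g(\alpha,\beta,\gamma)\big)$. Let $V$ be a set of $n$ vertices and suppose each unordered pair of distinct vertices is assigned exactly one of: red with a direction, blue, green, or purple with a direction, with $2\alpha\binom n2$ red, $\beta\binom n2$ blue, $\gamma\binom n2$ green and $2\delta\binom n2$ purple pairs. Then $T_p+T_g+T_c\le f(\alpha,\beta,\gamma,\delta)\,n^3/6$.
   Context: $T_g$ is the number of $3$-subsets of $V$ all of whose pairs are green; $T_p$ the number of $3$-subsets all of whose pairs are purple and directed cyclically; $T_c$ the number of $3$-subsets $\{x,y,z\}$ such that, for some labeling, $\{y,z\}$ is blue and $\{x,y\},\{x,z\}$ are red, directed $y\to x$ and $z\to x$. *)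

theory Defs
  imports Complex_Main
begin

datatype colour = Red | Blue | Green | Purple

text \<open>A colouring of the unordered pairs of distinct vertices of V: col gives the colour
  (required symmetric), dir gives the direction of red and purple pairs
  (dir x y means the pair is directed x to y; exactly one direction).\<close>
definition valid_colouring :: "'a set \<Rightarrow> ('a \<Rightarrow> 'a \<Rightarrow> colour) \<Rightarrow> ('a \<Rightarrow> 'a \<Rightarrow> bool) \<Rightarrow> bool" where
  "valid_colouring V col dir \<longleftrightarrow>
     (\<forall>x\<in>V. \<forall>y\<in>V. x \<noteq> y \<longrightarrow> col x y = col y x) \<and>
     (\<forall>x\<in>V. \<forall>y\<in>V. x \<noteq> y \<longrightarrow> col x y \<in> {Red, Purple} \<longrightarrow> (dir x y \<longleftrightarrow> \<not> dir y x))"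

definition pairs_of_colour :: "'a set \<Rightarrow> ('a \<Rightarrow> 'a \<Rightarrow> colour) \<Rightarrow> colour \<Rightarrow> 'a set set" where
  "pairs_of_colour V col c = {e. e \<subseteq> V \<and> (\<exists>x y. e = {x, y} \<and> x \<noteq> y \<and> col x y = c)}"

definition T_g :: "'a set \<Rightarrow> ('a \<Rightarrow> 'a \<Rightarrow> colour) \<Rightarrow> nat" where
  "T_g V col = card {S. S \<subseteq> V \<and> (\<exists>x y z. S = {x, y, z} \<and> x \<noteq> y \<and> y \<noteq> z \<and> x \<noteq> z \<and>
       col x y = Green \<and> col y z = Green \<and> col x z = Green)}"

definition T_p :: "'a set \<Rightarrow> ('a \<Rightarrow> 'a \<Rightarrow> colour) \<Rightarrow> ('a \<Rightarrow> 'a \<Rightarrow> bool) \<Rightarrow> nat" where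
  "T_p V col dir = card {S. S \<subseteq> V \<and> (\<exists>x y z. S = {x, y, z} \<and> x \<noteq> y \<and> y \<noteq> z \<and> x \<noteq> z \<and>
       col x y = Purple \<and> col y z = Purple \<and> col z x = Purple \<and>
       dir x y \<and> dir y z \<and> dir z x)}"

definition T_c :: "'a set \<Rightarrow> ('a \<Rightarrow> 'a \<Rightarrow> colour) \<Rightarrow> ('a \<Rightarrow> 'a \<Rightarrow> bool) \<Rightarrow> nat" where
  "T_c V col dir = card {S. S \<subseteq> V \<and> (\<exists>x y z. S = {x, y, z} \<and> x \<noteq> y \<and> y \<noteq> z \<and> x \<noteq> z \<and>
       col y z = Blue \<and> col x y = Red \<and> col x z = Red \<and> dir y x \<and> dir z x)}"

definition hm :: "real \<Rightarrow> real \<Rightarrow> real" where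
  "hm a b = (if a = 0 \<and> b = 0 then 0 else a * b / (a + b))"

definition g_fun :: "real \<Rightarrow> real \<Rightarrow> real \<Rightarrow> real" where
  "g_fun a b c = c powr (3/2) + min 0.465 (min (3 * hm a b) (3 * a * sqrt b))"

definition f_fun :: "real \<Rightarrow> real \<Rightarrow> real \<Rightarrow> real \<Rightarrow> real" where
  "f_fun a b c d = min (2 * d powr (3/2) + g_fun a b c) (1/4 + 3/4 * g_fun a b c)"

end

theory Submission
  imports Defs "HOL-Analysis.Convex"
begin

lemma sum3_indicator:
  assumes "finite V"
  shows "(\<Sum>x\<in>V. \<Sum>y\<in>V. \<Sum>z\<in>V. if Q x y z then 1 else 0 :: real)
       = real (card {p \<in> V \<times> V \<times> V. Q (fst p) (fst (snd p)) (snd (snd p))})"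
proof -
  have "(\<Sum>x\<in>V. \<Sum>y\<in>V. \<Sum>z\<in>V. if Q x y z then 1 else 0 :: real)
      = (\<Sum>p\<in>V \<times> V \<times> V. if Q (fst p) (fst (snd p)) (snd (snd p)) then 1 else 0)"
    by (simp add: sum.cartesian_product case_prod_beta)
  also have "\<dots> = (\<Sum>p\<in>{p \<in> V \<times> V \<times> V. Q (fst p) (fst (snd p)) (snd (snd p))}. 1)"
    using assms by (intro sum.inter_filter[symmetric]) auto
  finally show ?thesis by simp
qed

lemma set3_perm:
  assumes "{x,y,z} = {a,b,c::'a}" "x \<noteq> y" "y \<noteq> z" "x \<noteq> z"
  shows "(x,y,z) \<in> {(a,b,c),(a,c,b),(b,a,c),(b,c,a),(c,a,b),(c,b,a)}"
proof -
  have "x \<in> {a,b,c}" "y \<in> {a,b,c}" "z \<in> {a,b,c}" "a \<in> {x,y,z}" "b \<in> {x,y,z}" "c \<in> {x,y,z}"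
    using assms(1) by blast+
  then show ?thesis using assms(2-4) by auto
qed

lemma card6:
  assumes "a \<noteq> b" "b \<noteq> c" "a \<noteq> c"
  shows "card {(a,b,c),(a,c,b),(b,a,c),(b,c,a),(c,a,b),(c,b,a)} = 6"
  using assms by simp

lemma count3:
  assumes fin: "finite V"
    and F: "\<And>S. S \<in> F \<Longrightarrow> S \<subseteq> V \<and> (\<exists>x y z. S = {x,y,z} \<and> x\<noteq>y \<and> y\<noteq>z \<and> x\<noteq>z)"
  shows "(\<Sum>x\<in>V. \<Sum>y\<in>V. \<Sum>z\<in>V. if x\<noteq>y \<and> y\<noteq>z \<and> x\<noteq>z \<and> {x,y,z}\<in>F then 1 else 0 :: real)
     = 6 * real (card F)"
proof -
  define P where "P = {p \<in> V\<times>V\<times>V. fst p \<noteq> fst (snd p) \<and> fst (snd p) \<noteq> snd (snd p) \<and>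
      fst p \<noteq> snd (snd p) \<and> {fst p, fst (snd p), snd (snd p)} \<in> F}"
  define tri where "tri p = {fst p, fst (snd p), snd (snd p)}" for p :: "'a\<times>'a\<times>'a"
  have finF: "finite F"
    by (rule finite_subset[of F "Pow V"]) (use F fin in auto)
  have finP: "finite P" unfolding P_def using fin by auto
  have sub: "tri ` P \<subseteq> F" unfolding P_def tri_def by auto
  have fib: "card {p. p \<in> P \<and> tri p = S} = 6" if S: "S \<in> F" for S
  proof -
    obtain a b c where abc: "S = {a,b,c}" "a\<noteq>b" "b\<noteq>c" "a\<noteq>c" using F[OF S] by blast
    have V: "a \<in> V" "b \<in> V" "c \<in> V" using F[OF S] abc by auto
    have "{p. p \<in> P \<and> tri p = S} = {(a,b,c),(a,c,b),(b,a,c),(b,c,a),(c,a,b),(c,b,a)}"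
    proof (rule set_eqI, rule iffI)
      fix p assume "p \<in> {p. p \<in> P \<and> tri p = S}"
      then obtain x y z where p: "p = (x,y,z)" "x\<noteq>y" "y\<noteq>z" "x\<noteq>z" "{x,y,z} = {a,b,c}"
        unfolding P_def tri_def using abc by (cases p) auto
      show "p \<in> {(a,b,c),(a,c,b),(b,a,c),(b,c,a),(c,a,b),(c,b,a)}"
        using set3_perm[OF p(5) p(2-4)] p(1) by simp
    next
      fix p assume "p \<in> {(a,b,c),(a,c,b),(b,a,c),(b,c,a),(c,a,b),(c,b,a)}"
      then show "p \<in> {p. p \<in> P \<and> tri p = S}"
      proof -
        have perms: "{a,b,c} = S" "{a,c,b} = S" "{b,a,c} = S" "{b,c,a} = S" "{c,a,b} = S" "{c,b,a} = S"
          using abc(1) by blast+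
        have ne: "b \<noteq> a" "c \<noteq> b" "c \<noteq> a" using abc(2-4) by auto
        from \<open>p \<in> _\<close> have pc: "p = (a,b,c) \<or> p = (a,c,b) \<or> p = (b,a,c) \<or> p = (b,c,a) \<or> p = (c,a,b) \<or> p = (c,b,a)"
          by simp
        have mem: "\<And>x y z. x\<in>V \<Longrightarrow> y\<in>V \<Longrightarrow> z\<in>V \<Longrightarrow> x\<noteq>y \<Longrightarrow> y\<noteq>z \<Longrightarrow> x\<noteq>z
           \<Longrightarrow> {x,y,z} = S \<Longrightarrow> (x,y,z) \<in> P \<and> tri (x,y,z) = S"
          using S unfolding P_def tri_def by simp
        show ?thesis using mem[of a b c] mem[of a c b] mem[of b a c] mem[of b c a] mem[of c a b] mem[of c b a]
            V abc(2-4) ne perms pc by auto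
      qed
    qed
    then show ?thesis using card6[OF abc(2-4)] by simp
  qed
  have "card P = (\<Sum>S\<in>F. card {p. p \<in> P \<and> tri p = S})"
    using sum.group[OF finP finF sub, of "\<lambda>_. 1::nat"] by simp
  also have "\<dots> = (\<Sum>S\<in>F. 6)" using fib by simp
  finally have cP: "card P = 6 * card F" by simp
  have "(\<Sum>x\<in>V. \<Sum>y\<in>V. \<Sum>z\<in>V. if x\<noteq>y \<and> y\<noteq>z \<and> x\<noteq>z \<and> {x,y,z}\<in>F then 1 else 0 :: real)
     = real (card P)"
    unfolding P_def by (subst sum3_indicator[OF fin]) simp
  then show ?thesis using cP by simp
qed

lemma count2:
  assumes fin: "finite V"
    and F: "\<And>S. S \<in> F \<Longrightarrow> S \<subseteq> V \<and> (\<exists>x y. S = {x,y} \<and> x\<noteq>y)"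
  shows "(\<Sum>x\<in>V. \<Sum>y\<in>V. if x\<noteq>y \<and> {x,y}\<in>F then 1 else 0 :: real) = 2 * real (card F)"
proof -
  define P where "P = {p \<in> V\<times>V. fst p \<noteq> snd p \<and> {fst p, snd p} \<in> F}"
  define du where "du p = {fst p, snd p}" for p :: "'a\<times>'a"
  have finF: "finite F"
    by (rule finite_subset[of F "Pow V"]) (use F fin in auto)
  have finP: "finite P" unfolding P_def using fin by auto
  have sub: "du ` P \<subseteq> F" unfolding P_def du_def by auto
  have fib: "card {p. p \<in> P \<and> du p = S} = 2" if S: "S \<in> F" for S
  proof -
    obtain a b where ab: "S = {a,b}" "a\<noteq>b" using F[OF S] by blast
    have V: "a \<in> V" "b \<in> V" using F[OF S] ab by auto
    have "{p. p \<in> P \<and> du p = S} = {(a,b),(b,a)}"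
    proof (rule set_eqI, rule iffI)
      fix p assume "p \<in> {p. p \<in> P \<and> du p = S}"
      then obtain x y where p: "p = (x,y)" "x\<noteq>y" "{x,y} = {a,b}"
        unfolding P_def du_def using ab by (cases p) auto
      then show "p \<in> {(a,b),(b,a)}" by (auto simp: doubleton_eq_iff)
    next
      fix p assume "p \<in> {(a,b),(b,a)}"
      then show "p \<in> {p. p \<in> P \<and> du p = S}"
        using ab V S unfolding P_def du_def by (auto simp: insert_commute)
    qed
    then show ?thesis using ab by simp
  qed
  have "card P = (\<Sum>S\<in>F. card {p. p \<in> P \<and> du p = S})"
    using sum.group[OF finP finF sub, of "\<lambda>_. 1::nat"] by simp
  also have "\<dots> = (\<Sum>S\<in>F. 2)" using fib by simp
  finally have cP: "card P = 2 * card F" by simp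
  have "(\<Sum>x\<in>V. \<Sum>y\<in>V. if x\<noteq>y \<and> {x,y}\<in>F then 1 else 0 :: real)
      = (\<Sum>p\<in>V \<times> V. if fst p \<noteq> snd p \<and> {fst p, snd p} \<in> F then 1 else 0)"
    by (simp add: sum.cartesian_product case_prod_beta)
  also have "\<dots> = (\<Sum>p\<in>P. 1)"
    unfolding P_def using fin by (intro sum.inter_filter[symmetric]) auto
  finally show ?thesis using cP by simp
qed

lemma sum3_swap12:
  "(\<Sum>x\<in>V. \<Sum>y\<in>V. \<Sum>z\<in>V. f y x z) = (\<Sum>x\<in>V. \<Sum>y\<in>V. \<Sum>z\<in>V. (f x y z :: real))"
  by (rule sum.swap)

lemma sum3_swap23:
  "(\<Sum>x\<in>V. \<Sum>y\<in>V. \<Sum>z\<in>V. f x z y) = (\<Sum>x\<in>V. \<Sum>y\<in>V. \<Sum>z\<in>V. (f x y z :: real))"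
  by (rule sum.cong[OF refl], rule sum.swap)

lemma sum3_rot:
  "(\<Sum>x\<in>V. \<Sum>y\<in>V. \<Sum>z\<in>V. f z x y) = (\<Sum>x\<in>V. \<Sum>y\<in>V. \<Sum>z\<in>V. (f x y z :: real))"
proof -
  have "(\<Sum>x\<in>V. \<Sum>y\<in>V. \<Sum>z\<in>V. f z x y) = (\<Sum>x\<in>V. \<Sum>z\<in>V. \<Sum>y\<in>V. f z x y)"
    by (rule sum.cong[OF refl], rule sum.swap)
  also have "\<dots> = (\<Sum>z\<in>V. \<Sum>x\<in>V. \<Sum>y\<in>V. f z x y)"
    by (rule sum.swap)
  finally show ?thesis by simp
qed

lemma count_distinct3:
  assumes fin: "finite V"
  shows "(\<Sum>x\<in>V. \<Sum>y\<in>V. \<Sum>z\<in>V. if x\<noteq>y \<and> y\<noteq>z \<and> x\<noteq>z then 1 else 0 :: real)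
     = real (card V) * (real (card V) - 1) * (real (card V) - 2)"
proof -
  have inner: "(\<Sum>z\<in>V. if x\<noteq>y \<and> y\<noteq>z \<and> x\<noteq>z then 1 else 0 :: real)
      = (if x \<noteq> y then real (card V) - 2 else 0)" if "x \<in> V" "y \<in> V" for x y
  proof (cases "x = y")
    case False
    have "(\<Sum>z\<in>V. if x\<noteq>y \<and> y\<noteq>z \<and> x\<noteq>z then 1 else 0 :: real) = (\<Sum>z\<in>V - {x,y}. 1)"
      using fin False by (intro sum.mono_neutral_cong_right) auto
    also have "\<dots> = real (card V) - 2"
    proof -
      have "card {x,y} \<le> card V" using fin that by (intro card_mono) auto
      then have "2 \<le> card V" using False by simp
      then show ?thesis using fin False that by (simp add: card_Diff_subset of_nat_diff)
    qed
    finally show ?thesis using False by simp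
  qed simp
  have mid: "(\<Sum>y\<in>V. if x \<noteq> y then real (card V) - 2 else 0) = (real (card V) - 1) * (real (card V) - 2)"
    if "x \<in> V" for x
  proof -
    have "(\<Sum>y\<in>V. if x \<noteq> y then real (card V) - 2 else 0) = (\<Sum>y\<in>V - {x}. real (card V) - 2)"
      using fin that by (intro sum.mono_neutral_cong_right) auto
    also have "\<dots> = (real (card V) - 1) * (real (card V) - 2)"
    proof -
      have "card V \<ge> 1" using fin that by (metis One_nat_def Suc_leI card_gt_0_iff empty_iff)
      then show ?thesis using fin that by (simp add: of_nat_diff)
    qed
    finally show ?thesis .
  qed
  have "(\<Sum>x\<in>V. \<Sum>y\<in>V. \<Sum>z\<in>V. if x\<noteq>y \<and> y\<noteq>z \<and> x\<noteq>z then 1 else 0 :: real)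
      = (\<Sum>x\<in>V. (real (card V) - 1) * (real (card V) - 2))"
    using inner mid by simp
  then show ?thesis by simp
qed

lemma angle_bound:
  fixes V :: "'a set" and a W :: "'a \<Rightarrow> 'a \<Rightarrow> 'a \<Rightarrow> real" and \<kappa> C :: real
  assumes fin: "finite V"
    and pt: "\<And>x y z. x\<in>V \<Longrightarrow> y\<in>V \<Longrightarrow> z\<in>V \<Longrightarrow> x\<noteq>y \<Longrightarrow> y\<noteq>z \<Longrightarrow> x\<noteq>z \<Longrightarrow>
               W x y z \<le> a x y z + a y x z + a z x y - \<kappa>"
    and loc: "\<And>x. x\<in>V \<Longrightarrow> (\<Sum>y\<in>V. \<Sum>z\<in>V. if x\<noteq>y \<and> y\<noteq>z \<and> x\<noteq>z then a x y z else 0) \<le> C"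
  shows "(\<Sum>x\<in>V. \<Sum>y\<in>V. \<Sum>z\<in>V. if x\<noteq>y \<and> y\<noteq>z \<and> x\<noteq>z then W x y z else 0)
     \<le> 3 * real (card V) * C - \<kappa> * (real (card V) * (real (card V) - 1) * (real (card V) - 2))"
proof -
  define A where "A x y z = (if x\<noteq>y \<and> y\<noteq>z \<and> x\<noteq>z then a x y z else 0)" for x y z
  define I where "I (x::'a) y z = (if x\<noteq>y \<and> y\<noteq>z \<and> x\<noteq>z then 1 else 0::real)" for x y z
  have "(\<Sum>x\<in>V. \<Sum>y\<in>V. \<Sum>z\<in>V. if x\<noteq>y \<and> y\<noteq>z \<and> x\<noteq>z then W x y z else 0)
     \<le> (\<Sum>x\<in>V. \<Sum>y\<in>V. \<Sum>z\<in>V. A x y z + A y x z + A z x y - \<kappa> * I x y z)"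
    unfolding A_def I_def
    by (intro sum_mono) (auto simp: pt)
  also have "\<dots> = (\<Sum>x\<in>V. \<Sum>y\<in>V. \<Sum>z\<in>V. A x y z) + (\<Sum>x\<in>V. \<Sum>y\<in>V. \<Sum>z\<in>V. A y x z)
      + (\<Sum>x\<in>V. \<Sum>y\<in>V. \<Sum>z\<in>V. A z x y) - \<kappa> * (\<Sum>x\<in>V. \<Sum>y\<in>V. \<Sum>z\<in>V. I x y z)"
    by (simp add: sum.distrib sum_subtractf sum_distrib_left)
  also have "\<dots> = 3 * (\<Sum>x\<in>V. \<Sum>y\<in>V. \<Sum>z\<in>V. A x y z)
      - \<kappa> * (real (card V) * (real (card V) - 1) * (real (card V) - 2))"
    using sum3_swap12[of A V] sum3_rot[of A V] count_distinct3[OF fin] unfolding I_def by simp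
  also have "\<dots> \<le> 3 * (\<Sum>x\<in>V. C) - \<kappa> * (real (card V) * (real (card V) - 1) * (real (card V) - 2))"
  proof -
    have "(\<Sum>x\<in>V. \<Sum>y\<in>V. \<Sum>z\<in>V. A x y z) \<le> (\<Sum>x\<in>V. C)"
      using loc unfolding A_def by (intro sum_mono) simp
    then show ?thesis by simp
  qed
  finally show ?thesis by simp
qed

lemma cs3:
  fixes M :: "'a \<Rightarrow> 'a \<Rightarrow> real"
  assumes fin: "finite V" and M01: "\<And>x y. M x y = 0 \<or> M x y = 1"
  shows "(\<Sum>x\<in>V. \<Sum>y\<in>V. \<Sum>z\<in>V. M x y * M y z * M z x)\<^sup>2 \<le> (\<Sum>x\<in>V. \<Sum>y\<in>V. M x y) ^ 3"
proof -
  define E where "E = (\<Sum>x\<in>V. \<Sum>y\<in>V. M x y)"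
  define c where "c x y = (\<Sum>z\<in>V. M y z * M z x)" for x y
  define out where "out y = (\<Sum>z\<in>V. M y z)" for y
  define inn where "inn x = (\<Sum>z\<in>V. M z x)" for x
  have MM: "M x y * M x y = M x y" for x y using M01[of x y] by auto
  have E0: "0 \<le> E" unfolding E_def using M01 by (intro sum_nonneg) (metis order_refl zero_le_one)
  have Emono: "\<And>x y. x \<le> y \<Longrightarrow> E * x \<le> E * y" using E0 by (simp add: mult_left_mono)
  have S: "(\<Sum>x\<in>V. \<Sum>y\<in>V. \<Sum>z\<in>V. M x y * M y z * M z x) = (\<Sum>p\<in>V\<times>V. M (fst p) (snd p) * c (fst p) (snd p))"
  proof -
    have "(\<Sum>x\<in>V. \<Sum>y\<in>V. \<Sum>z\<in>V. M x y * M y z * M z x) = (\<Sum>x\<in>V. \<Sum>y\<in>V. M x y * c x y)"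
      unfolding c_def by (simp add: sum_distrib_left mult.assoc)
    also have "\<dots> = (\<Sum>p\<in>V\<times>V. M (fst p) (snd p) * c (fst p) (snd p))"
      by (subst sum.cartesian_product) (simp add: case_prod_beta)
    finally show ?thesis .
  qed
  have "(\<Sum>p\<in>V\<times>V. M (fst p) (snd p) * c (fst p) (snd p))\<^sup>2
      \<le> (\<Sum>p\<in>V\<times>V. (M (fst p) (snd p))\<^sup>2) * (\<Sum>p\<in>V\<times>V. (c (fst p) (snd p))\<^sup>2)"
    by (rule Cauchy_Schwarz_ineq_sum)
  also have "(\<Sum>p\<in>V\<times>V. (M (fst p) (snd p))\<^sup>2) = E"
    unfolding E_def by (simp add: power2_eq_square MM sum.cartesian_product case_prod_beta)
  also have "(\<Sum>p\<in>V\<times>V. (c (fst p) (snd p))\<^sup>2) \<le> (\<Sum>p\<in>V\<times>V. out (snd p) * inn (fst p))"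
  proof (rule sum_mono)
    fix p assume "p \<in> V \<times> V"
    have "(c (fst p) (snd p))\<^sup>2 \<le> (\<Sum>z\<in>V. (M (snd p) z)\<^sup>2) * (\<Sum>z\<in>V. (M z (fst p))\<^sup>2)"
      unfolding c_def by (rule Cauchy_Schwarz_ineq_sum)
    then show "(c (fst p) (snd p))\<^sup>2 \<le> out (snd p) * inn (fst p)"
      unfolding out_def inn_def by (simp add: power2_eq_square MM)
  qed
  also have "(\<Sum>p\<in>V\<times>V. out (snd p) * inn (fst p)) = (\<Sum>x\<in>V. inn x) * (\<Sum>y\<in>V. out y)"
    by (simp add: sum.cartesian_product case_prod_beta sum_product mult.commute)
  also have "(\<Sum>x\<in>V. inn x) = E" unfolding inn_def E_def by (rule sum.swap)
  also have "(\<Sum>y\<in>V. out y) = E" unfolding out_def E_def by simp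
  finally have "(\<Sum>p\<in>V\<times>V. M (fst p) (snd p) * c (fst p) (snd p))\<^sup>2 \<le> E * (E * E)"
    using Emono by blast
  then show ?thesis using S unfolding E_def by (simp add: power3_eq_cube)
qed

lemma vc_sym: "valid_colouring V col dir \<Longrightarrow> x\<in>V \<Longrightarrow> y\<in>V \<Longrightarrow> x\<noteq>y \<Longrightarrow> col y x = col x y"
  unfolding valid_colouring_def by metis

lemma vc_red: "valid_colouring V col dir \<Longrightarrow> x\<in>V \<Longrightarrow> y\<in>V \<Longrightarrow> x\<noteq>y \<Longrightarrow> col x y = Red \<Longrightarrow> (dir y x \<longleftrightarrow> \<not> dir x y)"
  unfolding valid_colouring_def by (metis insertCI)

lemma vc_pur: "valid_colouring V col dir \<Longrightarrow> x\<in>V \<Longrightarrow> y\<in>V \<Longrightarrow> x\<noteq>y \<Longrightarrow> col x y = Purple \<Longrightarrow> (dir y x \<longleftrightarrow> \<not> dir x y)"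
  unfolding valid_colouring_def by (metis insertCI)

lemma memG:
  assumes vc: "valid_colouring V col dir" and V: "x\<in>V" "y\<in>V" "z\<in>V" and d: "x\<noteq>y" "y\<noteq>z" "x\<noteq>z"
  shows "{x,y,z} \<in> {S. S \<subseteq> V \<and> (\<exists>x y z. S = {x, y, z} \<and> x \<noteq> y \<and> y \<noteq> z \<and> x \<noteq> z \<and>
       col x y = Green \<and> col y z = Green \<and> col x z = Green)}
    \<longleftrightarrow> col x y = Green \<and> col y z = Green \<and> col x z = Green"
proof
  assume "{x,y,z} \<in> {S. S \<subseteq> V \<and> (\<exists>x y z. S = {x, y, z} \<and> x \<noteq> y \<and> y \<noteq> z \<and> x \<noteq> z \<and>
       col x y = Green \<and> col y z = Green \<and> col x z = Green)}"
  then obtain a b c where abc: "{x,y,z} = {a,b,c}" "a\<noteq>b" "b\<noteq>c" "a\<noteq>c"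
     "col a b = Green" "col b c = Green" "col a c = Green" by blast
  have "{a,b,c} \<subseteq> V" using abc(1) V by (metis empty_subsetI insert_subset)
  then have abcV: "a\<in>V" "b\<in>V" "c\<in>V" by auto
  have s: "col b a = Green" "col c b = Green" "col c a = Green"
    using vc_sym[OF vc] abcV abc by metis+
  show "col x y = Green \<and> col y z = Green \<and> col x z = Green"
    using set3_perm[OF abc(1) d(1,2,3)] abc(5-7) s by auto
next
  assume "col x y = Green \<and> col y z = Green \<and> col x z = Green"
  then show "{x,y,z} \<in> {S. S \<subseteq> V \<and> (\<exists>x y z. S = {x, y, z} \<and> x \<noteq> y \<and> y \<noteq> z \<and> x \<noteq> z \<and>
       col x y = Green \<and> col y z = Green \<and> col x z = Green)}"
    using V d by blast
qed

lemma memP: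
  assumes vc: "valid_colouring V col dir" and V: "x\<in>V" "y\<in>V" "z\<in>V" and d: "x\<noteq>y" "y\<noteq>z" "x\<noteq>z"
  shows "{x,y,z} \<in> {S. S \<subseteq> V \<and> (\<exists>x y z. S = {x, y, z} \<and> x \<noteq> y \<and> y \<noteq> z \<and> x \<noteq> z \<and>
       col x y = Purple \<and> col y z = Purple \<and> col z x = Purple \<and> dir x y \<and> dir y z \<and> dir z x)}
    \<longleftrightarrow> (col x y = Purple \<and> col y z = Purple \<and> col z x = Purple \<and> dir x y \<and> dir y z \<and> dir z x)
      \<or> (col y x = Purple \<and> col z y = Purple \<and> col x z = Purple \<and> dir y x \<and> dir z y \<and> dir x z)"
proof
  assume "{x,y,z} \<in> {S. S \<subseteq> V \<and> (\<exists>x y z. S = {x, y, z} \<and> x \<noteq> y \<and> y \<noteq> z \<and> x \<noteq> z \<and>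
       col x y = Purple \<and> col y z = Purple \<and> col z x = Purple \<and> dir x y \<and> dir y z \<and> dir z x)}"
  then obtain a b c where abc: "{x,y,z} = {a,b,c}" "a\<noteq>b" "b\<noteq>c" "a\<noteq>c"
     "col a b = Purple" "col b c = Purple" "col c a = Purple" "dir a b" "dir b c" "dir c a" by blast
  have "{a,b,c} \<subseteq> V" using abc(1) V by (metis empty_subsetI insert_subset)
  then have abcV: "a\<in>V" "b\<in>V" "c\<in>V" by auto
  have s: "col b a = Purple" "col c b = Purple" "col a c = Purple"
    using vc_sym[OF vc] abcV abc by metis+
  show "(col x y = Purple \<and> col y z = Purple \<and> col z x = Purple \<and> dir x y \<and> dir y z \<and> dir z x)
      \<or> (col y x = Purple \<and> col z y = Purple \<and> col x z = Purple \<and> dir y x \<and> dir z y \<and> dir x z)"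
    using set3_perm[OF abc(1) d(1,2,3)] abc(5-10) s by auto
next
  assume "(col x y = Purple \<and> col y z = Purple \<and> col z x = Purple \<and> dir x y \<and> dir y z \<and> dir z x)
      \<or> (col y x = Purple \<and> col z y = Purple \<and> col x z = Purple \<and> dir y x \<and> dir z y \<and> dir x z)"
  then show "{x,y,z} \<in> {S. S \<subseteq> V \<and> (\<exists>x y z. S = {x, y, z} \<and> x \<noteq> y \<and> y \<noteq> z \<and> x \<noteq> z \<and>
       col x y = Purple \<and> col y z = Purple \<and> col z x = Purple \<and> dir x y \<and> dir y z \<and> dir z x)}"
  proof
    assume h: "col x y = Purple \<and> col y z = Purple \<and> col z x = Purple \<and> dir x y \<and> dir y z \<and> dir z x"
    show ?thesis using V d h by blast
  next
    assume h: "col y x = Purple \<and> col z y = Purple \<and> col x z = Purple \<and> dir y x \<and> dir z y \<and> dir x z"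
    have "{x,y,z} = {x,z,y}" by auto
    then show ?thesis using V d h by blast
  qed
qed

definition chr :: "('a \<Rightarrow> 'a \<Rightarrow> colour) \<Rightarrow> ('a \<Rightarrow> 'a \<Rightarrow> bool) \<Rightarrow> 'a \<Rightarrow> 'a \<Rightarrow> 'a \<Rightarrow> bool" where
  "chr col dir x y z \<longleftrightarrow> col y z = Blue \<and> col x y = Red \<and> col x z = Red \<and> dir y x \<and> dir z x"

lemma memC:
  assumes vc: "valid_colouring V col dir" and V: "x\<in>V" "y\<in>V" "z\<in>V" and d: "x\<noteq>y" "y\<noteq>z" "x\<noteq>z"
  shows "{x,y,z} \<in> {S. S \<subseteq> V \<and> (\<exists>x y z. S = {x, y, z} \<and> x \<noteq> y \<and> y \<noteq> z \<and> x \<noteq> z \<and>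
       col y z = Blue \<and> col x y = Red \<and> col x z = Red \<and> dir y x \<and> dir z x)}
    \<longleftrightarrow> chr col dir x y z \<or> chr col dir y x z \<or> chr col dir z x y"
proof
  assume "{x,y,z} \<in> {S. S \<subseteq> V \<and> (\<exists>x y z. S = {x, y, z} \<and> x \<noteq> y \<and> y \<noteq> z \<and> x \<noteq> z \<and>
       col y z = Blue \<and> col x y = Red \<and> col x z = Red \<and> dir y x \<and> dir z x)}"
  then obtain a b c where abc: "{x,y,z} = {a,b,c}" "a\<noteq>b" "b\<noteq>c" "a\<noteq>c"
     "col b c = Blue" "col a b = Red" "col a c = Red" "dir b a" "dir c a" by blast
  have "{a,b,c} \<subseteq> V" using abc(1) V by (metis empty_subsetI insert_subset)
  then have abcV: "a\<in>V" "b\<in>V" "c\<in>V" by auto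
  have s: "col c b = Blue" "col b a = Red" "col c a = Red"
    using vc_sym[OF vc] abcV abc by metis+
  show "chr col dir x y z \<or> chr col dir y x z \<or> chr col dir z x y"
    using set3_perm[OF abc(1) d(1,2,3)] abc(5-9) s unfolding chr_def by auto
next
  assume h: "chr col dir x y z \<or> chr col dir y x z \<or> chr col dir z x y"
  have s: "col y x = col x y" "col z x = col x z" "col z y = col y z"
    using vc_sym[OF vc] V d by metis+
  have e: "{x,y,z} = {y,x,z}" "{x,y,z} = {z,x,y}" by auto
  show "{x,y,z} \<in> {S. S \<subseteq> V \<and> (\<exists>x y z. S = {x, y, z} \<and> x \<noteq> y \<and> y \<noteq> z \<and> x \<noteq> z \<and>
       col y z = Blue \<and> col x y = Red \<and> col x z = Red \<and> dir y x \<and> dir z x)}"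
    using h V d e unfolding chr_def by blast
qed

definition ind :: "bool \<Rightarrow> real" where "ind P = (if P then 1 else 0)"

lemma ind_mult: "ind P * ind Q = ind (P \<and> Q)" by (simp add: ind_def)
lemma ind_01: "ind P = 0 \<or> ind P = 1" by (simp add: ind_def)
lemma ind_ge0: "0 \<le> ind P" by (simp add: ind_def)
lemma ind_le1: "ind P \<le> 1" by (simp add: ind_def)

lemma memPair:
  assumes vc: "valid_colouring V col dir" and V: "x\<in>V" "y\<in>V" and d: "x\<noteq>y"
  shows "{x,y} \<in> pairs_of_colour V col c \<longleftrightarrow> col x y = c"
proof
  assume "{x,y} \<in> pairs_of_colour V col c"
  then obtain a b where ab: "{x,y} = {a,b}" "a\<noteq>b" "col a b = c" unfolding pairs_of_colour_def by blast
  have "{a,b} \<subseteq> V" using ab(1) V by (metis empty_subsetI insert_subset)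
  then have "a\<in>V" "b\<in>V" by auto
  then have "col b a = c" using vc_sym[OF vc] ab by metis
  then show "col x y = c" using ab by (auto simp: doubleton_eq_iff)
next
  assume "col x y = c" then show "{x,y} \<in> pairs_of_colour V col c"
    unfolding pairs_of_colour_def using V d by blast
qed

lemma pair_sum:
  assumes fin: "finite V" and vc: "valid_colouring V col dir"
  shows "(\<Sum>x\<in>V. \<Sum>y\<in>V. ind (x\<noteq>y \<and> col x y = c)) = 2 * real (card (pairs_of_colour V col c))"
proof -
  have "(\<Sum>x\<in>V. \<Sum>y\<in>V. ind (x\<noteq>y \<and> col x y = c))
      = (\<Sum>x\<in>V. \<Sum>y\<in>V. if x\<noteq>y \<and> {x,y} \<in> pairs_of_colour V col c then 1 else 0)"
    by (intro sum.cong refl) (auto simp: ind_def memPair[OF vc])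
  also have "\<dots> = 2 * real (card (pairs_of_colour V col c))"
    by (rule count2[OF fin]) (auto simp: pairs_of_colour_def)
  finally show ?thesis .
qed

lemma pair_sum_dir:
  assumes fin: "finite V" and vc: "valid_colouring V col dir" and c: "c = Red \<or> c = Purple"
  shows "(\<Sum>x\<in>V. \<Sum>y\<in>V. ind (x\<noteq>y \<and> col x y = c \<and> dir x y)) = real (card (pairs_of_colour V col c))"
proof -
  have "(\<Sum>x\<in>V. \<Sum>y\<in>V. ind (x\<noteq>y \<and> col x y = c))
     = (\<Sum>x\<in>V. \<Sum>y\<in>V. ind (x\<noteq>y \<and> col x y = c \<and> dir x y) + ind (y\<noteq>x \<and> col y x = c \<and> dir y x))"
  proof (intro sum.cong refl)
    fix x y assume xy: "x \<in> V" "y \<in> V"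
    show "ind (x\<noteq>y \<and> col x y = c) = ind (x\<noteq>y \<and> col x y = c \<and> dir x y) + ind (y\<noteq>x \<and> col y x = c \<and> dir y x)"
      using vc_sym[OF vc xy] vc_red[OF vc xy] vc_pur[OF vc xy] c by (auto simp: ind_def)
  qed
  also have "\<dots> = 2 * (\<Sum>x\<in>V. \<Sum>y\<in>V. ind (x\<noteq>y \<and> col x y = c \<and> dir x y))"
    by (simp add: sum.distrib sum.swap[of "\<lambda>x y. ind (y\<noteq>x \<and> col y x = c \<and> dir y x)"])
  finally show ?thesis using pair_sum[OF fin vc, of c] by simp
qed

lemma Tg_sum:
  assumes fin: "finite V" and vc: "valid_colouring V col dir"
  shows "6 * real (T_g V col) = (\<Sum>x\<in>V. \<Sum>y\<in>V. \<Sum>z\<in>V.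
     ind (x\<noteq>y \<and> col x y = Green) * ind (y\<noteq>z \<and> col y z = Green) * ind (z\<noteq>x \<and> col z x = Green))"
proof -
  let ?F = "{S. S \<subseteq> V \<and> (\<exists>x y z. S = {x, y, z} \<and> x \<noteq> y \<and> y \<noteq> z \<and> x \<noteq> z \<and>
       col x y = Green \<and> col y z = Green \<and> col x z = Green)}"
  have "6 * real (T_g V col) = (\<Sum>x\<in>V. \<Sum>y\<in>V. \<Sum>z\<in>V. if x\<noteq>y \<and> y\<noteq>z \<and> x\<noteq>z \<and> {x,y,z} \<in> ?F then 1 else 0)"
    unfolding T_g_def by (rule count3[OF fin, symmetric]) blast
  also have "\<dots> = (\<Sum>x\<in>V. \<Sum>y\<in>V. \<Sum>z\<in>V.
     ind (x\<noteq>y \<and> col x y = Green) * ind (y\<noteq>z \<and> col y z = Green) * ind (z\<noteq>x \<and> col z x = Green))"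
  proof (intro sum.cong refl)
    fix x y z assume V: "x\<in>V" "y\<in>V" "z\<in>V"
    show "(if x\<noteq>y \<and> y\<noteq>z \<and> x\<noteq>z \<and> {x,y,z} \<in> ?F then 1 else 0) =
     ind (x\<noteq>y \<and> col x y = Green) * ind (y\<noteq>z \<and> col y z = Green) * ind (z\<noteq>x \<and> col z x = Green)"
    proof (cases "x\<noteq>y \<and> y\<noteq>z \<and> x\<noteq>z")
      case True
      have "(if x\<noteq>y \<and> y\<noteq>z \<and> x\<noteq>z \<and> {x,y,z} \<in> ?F then 1 else 0)
          = ind (col x y = Green \<and> col y z = Green \<and> col x z = Green)"
        using memG[OF vc V] True unfolding ind_def by presburger
      then show ?thesis using vc_sym[OF vc V(1) V(3)] True unfolding ind_def by auto
    qed (auto simp: ind_def)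
  qed
  finally show ?thesis .
qed

lemma Tp_sum:
  assumes fin: "finite V" and vc: "valid_colouring V col dir"
  shows "6 * real (T_p V col dir) = 2 * (\<Sum>x\<in>V. \<Sum>y\<in>V. \<Sum>z\<in>V.
     ind (x\<noteq>y \<and> col x y = Purple \<and> dir x y) * ind (y\<noteq>z \<and> col y z = Purple \<and> dir y z)
       * ind (z\<noteq>x \<and> col z x = Purple \<and> dir z x))"
proof -
  let ?F = "{S. S \<subseteq> V \<and> (\<exists>x y z. S = {x, y, z} \<and> x \<noteq> y \<and> y \<noteq> z \<and> x \<noteq> z \<and>
       col x y = Purple \<and> col y z = Purple \<and> col z x = Purple \<and> dir x y \<and> dir y z \<and> dir z x)}"
  define P where "P x y = ind (x\<noteq>y \<and> col x y = Purple \<and> dir x y)" for x y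
  have "6 * real (T_p V col dir) = (\<Sum>x\<in>V. \<Sum>y\<in>V. \<Sum>z\<in>V. if x\<noteq>y \<and> y\<noteq>z \<and> x\<noteq>z \<and> {x,y,z} \<in> ?F then 1 else 0)"
    unfolding T_p_def by (rule count3[OF fin, symmetric]) blast
  also have "\<dots> = (\<Sum>x\<in>V. \<Sum>y\<in>V. \<Sum>z\<in>V. P x y * P y z * P z x + P x z * P z y * P y x)"
  proof (intro sum.cong refl)
    fix x y z assume V: "x\<in>V" "y\<in>V" "z\<in>V"
    show "(if x\<noteq>y \<and> y\<noteq>z \<and> x\<noteq>z \<and> {x,y,z} \<in> ?F then 1 else 0) = P x y * P y z * P z x + P x z * P z y * P y x"
    proof (cases "x\<noteq>y \<and> y\<noteq>z \<and> x\<noteq>z")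
      case True
      let ?A = "col x y = Purple \<and> col y z = Purple \<and> col z x = Purple \<and> dir x y \<and> dir y z \<and> dir z x"
      let ?B = "col y x = Purple \<and> col z y = Purple \<and> col x z = Purple \<and> dir y x \<and> dir z y \<and> dir x z"
      have e1: "P x y * P y z * P z x = ind ?A" using True unfolding P_def ind_def by auto
      have e2: "P x z * P z y * P y x = ind ?B" using True unfolding P_def ind_def by auto
      have ex: "\<not> (?A \<and> ?B)" using vc_pur[OF vc V(1) V(2)] True by blast
      have "(if x\<noteq>y \<and> y\<noteq>z \<and> x\<noteq>z \<and> {x,y,z} \<in> ?F then 1 else 0) = ind (?A \<or> ?B)"
        using memP[OF vc V] True unfolding ind_def by presburger
      also have "\<dots> = ind ?A + ind ?B" using ex unfolding ind_def by auto
      finally show ?thesis using e1 e2 by simp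
    qed (auto simp: ind_def P_def)
  qed
  also have "\<dots> = (\<Sum>x\<in>V. \<Sum>y\<in>V. \<Sum>z\<in>V. P x y * P y z * P z x) + (\<Sum>x\<in>V. \<Sum>y\<in>V. \<Sum>z\<in>V. P x z * P z y * P y x)"
    by (simp add: sum.distrib)
  also have "(\<Sum>x\<in>V. \<Sum>y\<in>V. \<Sum>z\<in>V. P x z * P z y * P y x) = (\<Sum>x\<in>V. \<Sum>y\<in>V. \<Sum>z\<in>V. P x y * P y z * P z x)"
    using sum3_swap23[of "\<lambda>x y z. P x y * P y z * P z x" V] by simp
  finally show ?thesis unfolding P_def by simp
qed

definition Kc :: "('a \<Rightarrow> 'a \<Rightarrow> colour) \<Rightarrow> ('a \<Rightarrow> 'a \<Rightarrow> bool) \<Rightarrow> 'a \<Rightarrow> 'a \<Rightarrow> 'a \<Rightarrow> real" where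
  "Kc col dir x y z = ind (x\<noteq>y \<and> y\<noteq>z \<and> x\<noteq>z \<and> chr col dir x y z)"

lemma Tc_sum6:
  assumes fin: "finite V" and vc: "valid_colouring V col dir"
  shows "6 * real (T_c V col dir) = (\<Sum>x\<in>V. \<Sum>y\<in>V. \<Sum>z\<in>V. Kc col dir x y z + Kc col dir y x z + Kc col dir z x y)"
proof -
  let ?F = "{S. S \<subseteq> V \<and> (\<exists>x y z. S = {x, y, z} \<and> x \<noteq> y \<and> y \<noteq> z \<and> x \<noteq> z \<and>
       col y z = Blue \<and> col x y = Red \<and> col x z = Red \<and> dir y x \<and> dir z x)}"
  let ?K = "Kc col dir"
  have "6 * real (T_c V col dir) = (\<Sum>x\<in>V. \<Sum>y\<in>V. \<Sum>z\<in>V. if x\<noteq>y \<and> y\<noteq>z \<and> x\<noteq>z \<and> {x,y,z} \<in> ?F then 1 else 0)"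
    unfolding T_c_def by (rule count3[OF fin, symmetric]) blast
  also have "\<dots> = (\<Sum>x\<in>V. \<Sum>y\<in>V. \<Sum>z\<in>V. ?K x y z + ?K y x z + ?K z x y)"
  proof (intro sum.cong refl)
    fix x y z assume V: "x\<in>V" "y\<in>V" "z\<in>V"
    show "(if x\<noteq>y \<and> y\<noteq>z \<and> x\<noteq>z \<and> {x,y,z} \<in> ?F then 1 else 0) = ?K x y z + ?K y x z + ?K z x y"
    proof (cases "x\<noteq>y \<and> y\<noteq>z \<and> x\<noteq>z")
      case True
      have s: "col y x = col x y" "col z x = col x z" "col z y = col y z"
        using vc_sym[OF vc] V True by metis+
      have ex: "\<not> (chr col dir x y z \<and> chr col dir y x z)" "\<not> (chr col dir x y z \<and> chr col dir z x y)"
         "\<not> (chr col dir y x z \<and> chr col dir z x y)" using s unfolding chr_def by auto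
      have "(if x\<noteq>y \<and> y\<noteq>z \<and> x\<noteq>z \<and> {x,y,z} \<in> ?F then 1 else 0)
          = ind (chr col dir x y z \<or> chr col dir y x z \<or> chr col dir z x y)"
        using memC[OF vc V] True unfolding ind_def by presburger
      also have "\<dots> = ind (chr col dir x y z) + ind (chr col dir y x z) + ind (chr col dir z x y)"
        using ex unfolding ind_def by auto
      finally show ?thesis using True unfolding Kc_def by auto
    qed (auto simp: Kc_def ind_def)
  qed
  finally show ?thesis .
qed

lemma Tc_sum:
  assumes fin: "finite V" and vc: "valid_colouring V col dir"
  shows "2 * real (T_c V col dir) = (\<Sum>x\<in>V. \<Sum>y\<in>V. \<Sum>z\<in>V.
     ind (y\<noteq>x \<and> col y x = Red \<and> dir y x) * ind (z\<noteq>x \<and> col z x = Red \<and> dir z x) * ind (y\<noteq>z \<and> col y z = Blue))"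
proof -
  define K where "K = Kc col dir"
  have "6 * real (T_c V col dir) = (\<Sum>x\<in>V. \<Sum>y\<in>V. \<Sum>z\<in>V. K x y z + K y x z + K z x y)"
    unfolding K_def by (rule Tc_sum6[OF fin vc])
  also have "\<dots> = 3 * (\<Sum>x\<in>V. \<Sum>y\<in>V. \<Sum>z\<in>V. K x y z)"
    using sum3_swap12[of K V] sum3_rot[of K V] by (simp add: sum.distrib)
  also have "(\<Sum>x\<in>V. \<Sum>y\<in>V. \<Sum>z\<in>V. K x y z) = (\<Sum>x\<in>V. \<Sum>y\<in>V. \<Sum>z\<in>V.
     ind (y\<noteq>x \<and> col y x = Red \<and> dir y x) * ind (z\<noteq>x \<and> col z x = Red \<and> dir z x) * ind (y\<noteq>z \<and> col y z = Blue))"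
  proof (intro sum.cong refl)
    fix x y z assume V: "x\<in>V" "y\<in>V" "z\<in>V"
    show "K x y z = ind (y\<noteq>x \<and> col y x = Red \<and> dir y x) * ind (z\<noteq>x \<and> col z x = Red \<and> dir z x) * ind (y\<noteq>z \<and> col y z = Blue)"
    proof (cases "x\<noteq>y \<and> y\<noteq>z \<and> x\<noteq>z")
      case True
      have s: "col y x = col x y" "col z x = col x z"
        using vc_sym[OF vc] V True by metis+
      show ?thesis using True s unfolding K_def Kc_def chr_def ind_def by auto
    qed (auto simp: K_def Kc_def ind_def)
  qed
  finally show ?thesis by simp
qed

lemma choose2_real_aux: "real (n choose (Suc (Suc 0))) = real n * (real n - 1) / 2"
proof (induction n)
  case 0 then show ?case by simp
next
  case (Suc n)
  have "Suc n choose (Suc (Suc 0)) = (n choose (Suc 0)) + (n choose (Suc (Suc 0)))" by (rule binomial_Suc_Suc)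
  then have "real (Suc n choose (Suc (Suc 0))) = real n + real (n choose (Suc (Suc 0)))" by simp
  then show ?case using Suc by (simp add: field_simps)
qed

lemma choose2_real: "real (n choose 2) = real n * (real n - 1) / 2"
  using choose2_real_aux[of n] by (simp add: numeral_2_eq_2)

lemma sqrt_bound:
  fixes S E c N :: real
  assumes "0 \<le> S" "0 \<le> E" "S\<^sup>2 \<le> E ^ 3" "E \<le> c * N\<^sup>2" "0 \<le> c" "0 \<le> N"
  shows "S \<le> c * sqrt c * N ^ 3"
proof -
  have "S = sqrt (S\<^sup>2)" using assms(1) by simp
  also have "\<dots> \<le> sqrt (E ^ 3)" using assms(3) by (rule real_sqrt_le_mono)
  also have "\<dots> \<le> sqrt ((c * N\<^sup>2) ^ 3)" using assms(2,4) by (intro real_sqrt_le_mono power_mono) auto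
  also have "(c * N\<^sup>2) ^ 3 = (c * N ^ 3)\<^sup>2 * c" by (simp add: power2_eq_square power3_eq_cube algebra_simps)
  also have "sqrt ((c * N ^ 3)\<^sup>2 * c) = c * N ^ 3 * sqrt c"
    using assms(5,6) by (simp add: real_sqrt_mult)
  finally show ?thesis by (simp add: algebra_simps)
qed

lemma powr32: "0 \<le> (x::real) \<Longrightarrow> x powr (3/2) = x * sqrt x"
proof -
  assume x: "0 \<le> x"
  have "x powr (3/2) = x powr (1 + 1/2)" by simp
  also have "\<dots> = x powr 1 * x powr (1/2)" by (rule powr_add)
  also have "\<dots> = x * sqrt x" using x by (cases "x = 0") (simp_all add: powr_half_sqrt)
  finally show ?thesis .
qed

lemma Tg_bound:
  assumes fin: "finite V" and vc: "valid_colouring V col dir" and n: "card V = n" and g: "0 \<le> \<gamma>"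
    and cnt: "real (card (pairs_of_colour V col Green)) = \<gamma> * real (n choose 2)"
  shows "real (T_g V col) \<le> \<gamma> powr (3/2) * real n ^ 3 / 6"
proof -
  define M where "M x y = ind (x\<noteq>y \<and> col x y = Green)" for x y
  define S where "S = (\<Sum>x\<in>V. \<Sum>y\<in>V. \<Sum>z\<in>V. M x y * M y z * M z x)"
  define E where "E = (\<Sum>x\<in>V. \<Sum>y\<in>V. M x y)"
  have S6: "6 * real (T_g V col) = S" unfolding S_def M_def using Tg_sum[OF fin vc] by simp
  have cs: "S\<^sup>2 \<le> E ^ 3" unfolding S_def E_def by (rule cs3[OF fin]) (simp add: M_def ind_01)
  have S0: "0 \<le> S" unfolding S_def M_def by (intro sum_nonneg mult_nonneg_nonneg ind_ge0)
  have E0: "0 \<le> E" unfolding E_def M_def by (intro sum_nonneg ind_ge0)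
  have "E = 2 * real (card (pairs_of_colour V col Green))" unfolding E_def M_def by (rule pair_sum[OF fin vc])
  also have "\<dots> = \<gamma> * (real n * (real n - 1))" using cnt choose2_real[of n] by simp
  also have "\<dots> \<le> \<gamma> * (real n)\<^sup>2" using g by (intro mult_left_mono) (auto simp: power2_eq_square algebra_simps)
  finally have "E \<le> \<gamma> * (real n)\<^sup>2" .
  then have "S \<le> \<gamma> * sqrt \<gamma> * real n ^ 3" using sqrt_bound[OF S0 E0 cs _ g] by simp
  then show ?thesis using S6 powr32[OF g] by simp
qed

lemma Tp_bound:
  assumes fin: "finite V" and vc: "valid_colouring V col dir" and n: "card V = n" and d: "0 \<le> \<delta>"
    and cnt: "real (card (pairs_of_colour V col Purple)) = 2 * \<delta> * real (n choose 2)"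
  shows "real (T_p V col dir) \<le> 2 * \<delta> powr (3/2) * real n ^ 3 / 6"
proof -
  define M where "M x y = ind (x\<noteq>y \<and> col x y = Purple \<and> dir x y)" for x y
  define S where "S = (\<Sum>x\<in>V. \<Sum>y\<in>V. \<Sum>z\<in>V. M x y * M y z * M z x)"
  define E where "E = (\<Sum>x\<in>V. \<Sum>y\<in>V. M x y)"
  have S6: "6 * real (T_p V col dir) = 2 * S" unfolding S_def M_def using Tp_sum[OF fin vc] by simp
  have cs: "S\<^sup>2 \<le> E ^ 3" unfolding S_def E_def by (rule cs3[OF fin]) (simp add: M_def ind_01)
  have S0: "0 \<le> S" unfolding S_def M_def by (intro sum_nonneg mult_nonneg_nonneg ind_ge0)
  have E0: "0 \<le> E" unfolding E_def M_def by (intro sum_nonneg ind_ge0)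
  have "E = real (card (pairs_of_colour V col Purple))" unfolding E_def M_def by (rule pair_sum_dir[OF fin vc]) simp
  also have "\<dots> = \<delta> * (real n * (real n - 1))" using cnt choose2_real[of n] by simp
  also have "\<dots> \<le> \<delta> * (real n)\<^sup>2" using d by (intro mult_left_mono) (auto simp: power2_eq_square algebra_simps)
  finally have "E \<le> \<delta> * (real n)\<^sup>2" .
  then have "S \<le> \<delta> * sqrt \<delta> * real n ^ 3" using sqrt_bound[OF S0 E0 cs _ d] by simp
  then show ?thesis using S6 powr32[OF d] by simp
qed

lemma min_sqrt:
  fixes t u B :: real
  assumes "t \<le> u\<^sup>2" "t \<le> B" "0 \<le> u" "0 \<le> B"
  shows "t \<le> u * sqrt B"
proof (cases "u\<^sup>2 \<le> B")
  case True
  then have "u \<le> sqrt B" using assms(3) real_le_rsqrt by blast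
  then have "u * u \<le> u * sqrt B" using assms(3) by (rule mult_left_mono)
  then show ?thesis using assms(1) by (simp add: power2_eq_square)
next
  case False
  have "sqrt B \<le> sqrt (u\<^sup>2)" using False by (intro real_sqrt_le_mono) simp
  then have "sqrt B \<le> u" using assms(3) by simp
  then have "sqrt B * sqrt B \<le> u * sqrt B" using assms(4) by (intro mult_right_mono) auto
  moreover have "sqrt B * sqrt B = B" using assms(4) by simp
  ultimately show ?thesis using assms(2) by linarith
qed

lemma Tc_sqrt:
  assumes fin: "finite V" and vc: "valid_colouring V col dir" and n: "card V = n"
    and a: "0 \<le> \<alpha>" and b: "0 \<le> \<beta>"
    and cntR: "real (card (pairs_of_colour V col Red)) = 2 * \<alpha> * real (n choose 2)"
    and cntB: "real (card (pairs_of_colour V col Blue)) = \<beta> * real (n choose 2)"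
  shows "real (T_c V col dir) \<le> 3 * \<alpha> * sqrt \<beta> * real n ^ 3 / 6"
proof -
  define R where "R y x = ind (y\<noteq>x \<and> col y x = Red \<and> dir y x)" for y x
  define Bl where "Bl y z = ind (y\<noteq>z \<and> col y z = Blue)" for y z
  define Bs where "Bs = (\<Sum>y\<in>V. \<Sum>z\<in>V. Bl y z)"
  define r where "r x = (\<Sum>y\<in>V. R y x)" for x
  have nn: "0 \<le> real n * (real n - 1)" by (cases n) auto
  have T2: "2 * real (T_c V col dir) = (\<Sum>x\<in>V. \<Sum>y\<in>V. \<Sum>z\<in>V. R y x * R z x * Bl y z)"
    unfolding R_def Bl_def by (rule Tc_sum[OF fin vc])
  have Bs_eq: "Bs = \<beta> * (real n * (real n - 1))"
    unfolding Bs_def Bl_def using pair_sum[OF fin vc, of Blue] cntB choose2_real[of n] by simp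
  have Bs0: "0 \<le> Bs" unfolding Bs_def Bl_def by (intro sum_nonneg ind_ge0)
  have r0: "0 \<le> r x" for x unfolding r_def R_def by (intro sum_nonneg ind_ge0)
  have rs: "(\<Sum>x\<in>V. r x) = \<alpha> * (real n * (real n - 1))"
  proof -
    have "(\<Sum>x\<in>V. r x) = (\<Sum>y\<in>V. \<Sum>x\<in>V. R y x)" unfolding r_def by (rule sum.swap)
    also have "\<dots> = real (card (pairs_of_colour V col Red))"
      unfolding R_def by (rule pair_sum_dir[OF fin vc]) simp
    finally show ?thesis using cntR choose2_real[of n] by simp
  qed
  have px: "(\<Sum>y\<in>V. \<Sum>z\<in>V. R y x * R z x * Bl y z) \<le> r x * sqrt Bs" for x
  proof (rule min_sqrt)
    have "(\<Sum>y\<in>V. \<Sum>z\<in>V. R y x * R z x * Bl y z) \<le> (\<Sum>y\<in>V. \<Sum>z\<in>V. R y x * R z x)"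
      unfolding R_def Bl_def by (intro sum_mono) (simp add: ind_def)
    also have "\<dots> = (r x)\<^sup>2" unfolding r_def by (simp add: power2_eq_square sum_product)
    finally show "(\<Sum>y\<in>V. \<Sum>z\<in>V. R y x * R z x * Bl y z) \<le> (r x)\<^sup>2" .
    show "(\<Sum>y\<in>V. \<Sum>z\<in>V. R y x * R z x * Bl y z) \<le> Bs"
      unfolding Bs_def R_def Bl_def by (intro sum_mono) (simp add: ind_def)
  qed (use r0 Bs0 in auto)
  have "2 * real (T_c V col dir) \<le> (\<Sum>x\<in>V. r x * sqrt Bs)" unfolding T2 by (intro sum_mono px)
  also have "\<dots> = sqrt Bs * (\<alpha> * (real n * (real n - 1)))" using rs by (simp add: mult.commute flip: sum_distrib_left)
  also have "\<dots> \<le> (sqrt \<beta> * real n) * (\<alpha> * (real n)\<^sup>2)"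
  proof (rule mult_mono)
    have bn: "0 \<le> \<beta> * real n" using b by simp
    have "Bs \<le> \<beta> * (real n)\<^sup>2" using Bs_eq bn by (simp add: power2_eq_square algebra_simps)
    then have "sqrt Bs \<le> sqrt (\<beta> * (real n)\<^sup>2)" by (rule real_sqrt_le_mono)
    then show "sqrt Bs \<le> sqrt \<beta> * real n" by (simp add: real_sqrt_mult)
    show "\<alpha> * (real n * (real n - 1)) \<le> \<alpha> * (real n)\<^sup>2" using a
      by (intro mult_left_mono) (auto simp: power2_eq_square algebra_simps)
  qed (use a b nn in auto)
  finally show ?thesis by (simp add: power3_eq_cube power2_eq_square algebra_simps)
qed

lemma hm_pt:
  fixes b q m s t :: real
  assumes "0 \<le> b" "0 \<le> q" "b + q \<le> m" "s + t = 1"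
  shows "b * q \<le> m * (s\<^sup>2 * b + t\<^sup>2 * q)"
proof -
  have t: "t = 1 - s" using assms(4) by simp
  have "(b + q) * (s\<^sup>2 * b + t\<^sup>2 * q) - b * q = (s * b - t * q)\<^sup>2"
    unfolding t by (simp add: power2_eq_square algebra_simps)
  then have "b * q \<le> (b + q) * (s\<^sup>2 * b + t\<^sup>2 * q)" by (metis diff_ge_0_iff_ge zero_le_power2)
  also have "\<dots> \<le> m * (s\<^sup>2 * b + t\<^sup>2 * q)"
    using assms(1-3) by (intro mult_right_mono) auto
  finally show ?thesis .
qed

lemma sum_ne:
  assumes "finite V" "y \<in> V"
  shows "(\<Sum>z\<in>V. ind (y \<noteq> z)) = real (card V) - 1"
proof -
  have "(\<Sum>z\<in>V. ind (y \<noteq> z)) = (\<Sum>z\<in>V - {y}. 1)"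
    using assms by (intro sum.mono_neutral_cong_right) (auto simp: ind_def)
  also have "\<dots> = real (card V) - 1"
  proof -
    have "card V \<ge> 1" using assms by (metis One_nat_def Suc_leI card_gt_0_iff empty_iff)
    then show ?thesis using assms by (simp add: of_nat_diff)
  qed
  finally show ?thesis .
qed

lemma Tc_hm:
  assumes fin: "finite V" and vc: "valid_colouring V col dir" and n: "card V = n"
    and a: "0 \<le> \<alpha>" and b: "0 \<le> \<beta>"
    and cntR: "real (card (pairs_of_colour V col Red)) = 2 * \<alpha> * real (n choose 2)"
    and cntB: "real (card (pairs_of_colour V col Blue)) = \<beta> * real (n choose 2)"
  shows "real (T_c V col dir) \<le> 3 * hm \<alpha> \<beta> * real n ^ 3 / 6"
proof -
  define R where "R y x = ind (y\<noteq>x \<and> col y x = Red \<and> dir y x)" for y x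
  define Bl where "Bl y z = ind (y\<noteq>z \<and> col y z = Blue)" for y z
  define ov where "ov y = (\<Sum>x\<in>V. R y x)" for y
  define bb where "bb y = (\<Sum>z\<in>V. Bl y z)" for y
  have nn: "0 \<le> real n * (real n - 1)" by (cases n) auto
  have T2: "2 * real (T_c V col dir) = (\<Sum>x\<in>V. \<Sum>y\<in>V. \<Sum>z\<in>V. R y x * R z x * Bl y z)"
    unfolding R_def Bl_def by (rule Tc_sum[OF fin vc])
  also have "\<dots> = (\<Sum>y\<in>V. \<Sum>z\<in>V. \<Sum>x\<in>V. R y x * R z x * Bl y z)"
    by (subst sum.swap) (intro sum.cong refl sum.swap)
  also have "\<dots> \<le> (\<Sum>y\<in>V. \<Sum>z\<in>V. \<Sum>x\<in>V. R y x * Bl y z)"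
    unfolding R_def Bl_def by (intro sum_mono) (simp add: ind_def)
  also have "\<dots> = (\<Sum>y\<in>V. bb y * ov y)"
    unfolding bb_def ov_def sum_product by (simp add: mult.commute)
  finally have T2': "2 * real (T_c V col dir) \<le> (\<Sum>y\<in>V. bb y * ov y)" .
  have Bs: "(\<Sum>y\<in>V. bb y) = \<beta> * (real n * (real n - 1))"
    unfolding bb_def Bl_def using pair_sum[OF fin vc, of Blue] cntB choose2_real[of n] by simp
  have Rs: "(\<Sum>y\<in>V. ov y) = \<alpha> * (real n * (real n - 1))"
    unfolding ov_def R_def using pair_sum_dir[OF fin vc, of Red] cntR choose2_real[of n] by simp
  have key: "2 * real (T_c V col dir) \<le> (real n - 1) * (real n * (real n - 1)) * (s\<^sup>2 * \<beta> + t\<^sup>2 * \<alpha>)"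
    if st: "s + t = 1" for s t
  proof -
    have "(\<Sum>y\<in>V. bb y * ov y) \<le> (\<Sum>y\<in>V. (real n - 1) * (s\<^sup>2 * bb y + t\<^sup>2 * ov y))"
    proof (rule sum_mono)
      fix y assume y: "y \<in> V"
      have "bb y + ov y = (\<Sum>z\<in>V. Bl y z + R y z)" unfolding bb_def ov_def by (simp add: sum.distrib)
      also have "\<dots> \<le> (\<Sum>z\<in>V. ind (y \<noteq> z))"
        unfolding Bl_def R_def by (intro sum_mono) (auto simp: ind_def)
      also have "\<dots> = real n - 1" using sum_ne[OF fin y] n by simp
      finally have le: "bb y + ov y \<le> real n - 1" .
      show "bb y * ov y \<le> (real n - 1) * (s\<^sup>2 * bb y + t\<^sup>2 * ov y)"
        by (rule hm_pt[OF _ _ le st]) (auto simp: bb_def ov_def Bl_def R_def intro!: sum_nonneg ind_ge0)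
    qed
    also have "\<dots> = (real n - 1) * (s\<^sup>2 * (\<Sum>y\<in>V. bb y) + t\<^sup>2 * (\<Sum>y\<in>V. ov y))"
      by (simp add: sum.distrib flip: sum_distrib_left)
    also have "\<dots> = (real n - 1) * (real n * (real n - 1)) * (s\<^sup>2 * \<beta> + t\<^sup>2 * \<alpha>)"
      unfolding Bs Rs by (simp add: algebra_simps)
    finally show ?thesis using T2' by simp
  qed
  have n3: "(real n - 1) * (real n * (real n - 1)) \<le> real n ^ 3" by (cases n) (auto simp: power3_eq_cube algebra_simps)
  show ?thesis
  proof (cases "\<alpha> + \<beta> = 0")
    case True
    then have "\<alpha> = 0" "\<beta> = 0" using a b by auto
    then show ?thesis using key[of 0 1] by (simp add: hm_def)
  next
    case False
    then have pos: "0 < \<alpha> + \<beta>" using a b by auto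
    have "(\<alpha>/(\<alpha>+\<beta>))\<^sup>2 * \<beta> + (\<beta>/(\<alpha>+\<beta>))\<^sup>2 * \<alpha> = hm \<alpha> \<beta>"
    proof -
      have "(\<alpha>/(\<alpha>+\<beta>))\<^sup>2 * \<beta> + (\<beta>/(\<alpha>+\<beta>))\<^sup>2 * \<alpha>
          = (\<alpha>*\<alpha>*\<beta> + \<beta>*\<beta>*\<alpha>) / ((\<alpha>+\<beta>)*(\<alpha>+\<beta>))"
        by (simp add: power2_eq_square add_divide_distrib)
      also have "\<dots> = ((\<alpha>*\<beta>)*(\<alpha>+\<beta>)) / ((\<alpha>+\<beta>)*(\<alpha>+\<beta>))"
        by (simp add: algebra_simps)
      also have "\<dots> = \<alpha>*\<beta>/(\<alpha>+\<beta>)" using False by (rule nonzero_mult_divide_mult_cancel_right)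
      finally show ?thesis using False a b by (auto simp: hm_def)
    qed
    moreover have "\<alpha>/(\<alpha>+\<beta>) + \<beta>/(\<alpha>+\<beta>) = 1" using False by (simp flip: add_divide_distrib)
    ultimately have k: "2 * real (T_c V col dir) \<le> (real n - 1) * (real n * (real n - 1)) * hm \<alpha> \<beta>"
      using key by metis
    have hm0: "0 \<le> hm \<alpha> \<beta>" using a b by (simp add: hm_def)
    have "(real n - 1) * (real n * (real n - 1)) * hm \<alpha> \<beta> \<le> real n ^ 3 * hm \<alpha> \<beta>"
      using n3 hm0 by (rule mult_right_mono)
    then have "2 * real (T_c V col dir) \<le> real n ^ 3 * hm \<alpha> \<beta>" using k by linarith
    then show ?thesis by (simp add: mult.commute)
  qed
qed

lemma joint_pt:
  assumes vc: "valid_colouring V col dir" and V: "x\<in>V" "y\<in>V" "z\<in>V" and d: "x\<noteq>y" "y\<noteq>z" "x\<noteq>z"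
  defines "aj \<equiv> \<lambda>x y z. ind (y\<noteq>x) * ind (z\<noteq>x)
     - (ind (y\<noteq>x \<and> col x y = Purple \<and> dir y x) - ind (y\<noteq>x \<and> col x y = Purple \<and> dir x y))
     * (ind (z\<noteq>x \<and> col x z = Purple \<and> dir z x) - ind (z\<noteq>x \<and> col x z = Purple \<and> dir x z))"
  defines "P \<equiv> \<lambda>x y. ind (x\<noteq>y \<and> col x y = Purple \<and> dir x y)"
  defines "G \<equiv> \<lambda>x y. ind (x\<noteq>y \<and> col x y = Green)"
  shows "4 * (P x y * P y z * P z x + P x z * P z y * P y x) + G x y * G y z * G z x
      + (Kc col dir x y z + Kc col dir y x z + Kc col dir z x y)
    \<le> aj x y z + aj y x z + aj z x y - 2"
proof -
  have s: "col y x = col x y" "col z x = col x z" "col z y = col y z"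
    using vc_sym[OF vc] V d by metis+
  have p1: "col x y = Purple \<Longrightarrow> dir y x = (\<not> dir x y)" using vc_pur[OF vc V(1) V(2) d(1)] by simp
  have p2: "col x z = Purple \<Longrightarrow> dir z x = (\<not> dir x z)" using vc_pur[OF vc V(1) V(3) d(3)] by simp
  have p3: "col y z = Purple \<Longrightarrow> dir z y = (\<not> dir y z)" using vc_pur[OF vc V(2) V(3) d(2)] by simp
  show ?thesis
    unfolding aj_def P_def G_def Kc_def chr_def
    using d s p1 p2 p3
    by (cases "col x y"; cases "col x z"; cases "col y z"; cases "dir x y"; cases "dir x z"; cases "dir y z")
       (simp_all add: ind_def)
qed

lemma Tp_sum6:
  assumes fin: "finite V" and vc: "valid_colouring V col dir"
  defines "P \<equiv> \<lambda>x y. ind (x\<noteq>y \<and> col x y = Purple \<and> dir x y)"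
  shows "6 * real (T_p V col dir) = (\<Sum>x\<in>V. \<Sum>y\<in>V. \<Sum>z\<in>V. P x y * P y z * P z x + P x z * P z y * P y x)"
proof -
  have "(\<Sum>x\<in>V. \<Sum>y\<in>V. \<Sum>z\<in>V. P x z * P z y * P y x) = (\<Sum>x\<in>V. \<Sum>y\<in>V. \<Sum>z\<in>V. P x y * P y z * P z x)"
    using sum3_swap23[of "\<lambda>x y z. P x y * P y z * P z x" V] by simp
  then show ?thesis using Tp_sum[OF fin vc] unfolding P_def by (simp add: sum.distrib)
qed

lemma joint_bound:
  assumes fin: "finite V" and vc: "valid_colouring V col dir" and n: "card V = n"
  shows "4 * real (T_p V col dir) + real (T_g V col) + real (T_c V col dir) \<le> real n ^ 3 / 6"
proof -
  define aj where "aj = (\<lambda>x y z. ind (y\<noteq>x) * ind (z\<noteq>x)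
     - (ind (y\<noteq>x \<and> col x y = Purple \<and> dir y x) - ind (y\<noteq>x \<and> col x y = Purple \<and> dir x y))
     * (ind (z\<noteq>x \<and> col x z = Purple \<and> dir z x) - ind (z\<noteq>x \<and> col x z = Purple \<and> dir x z)))"
  define P where "P = (\<lambda>x y. ind (x\<noteq>y \<and> col x y = Purple \<and> dir x y))"
  define G where "G = (\<lambda>x y. ind (x\<noteq>y \<and> col x y = Green))"
  define W where "W = (\<lambda>x y z. 4 * (P x y * P y z * P z x + P x z * P z y * P y x) + G x y * G y z * G z x
      + (Kc col dir x y z + Kc col dir y x z + Kc col dir z x y))"
  have sumW: "(\<Sum>x\<in>V. \<Sum>y\<in>V. \<Sum>z\<in>V. W x y z) = 6 * (4 * real (T_p V col dir) + real (T_g V col) + real (T_c V col dir))"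
    using Tp_sum6[OF fin vc] Tg_sum[OF fin vc] Tc_sum6[OF fin vc]
    unfolding W_def P_def G_def by (simp add: sum.distrib sum_distrib_left algebra_simps)
  have Wd: "(\<Sum>x\<in>V. \<Sum>y\<in>V. \<Sum>z\<in>V. W x y z) = (\<Sum>x\<in>V. \<Sum>y\<in>V. \<Sum>z\<in>V. if x\<noteq>y \<and> y\<noteq>z \<and> x\<noteq>z then W x y z else 0)"
    by (intro sum.cong refl) (auto simp: W_def P_def G_def Kc_def ind_def)
  have loc: "(\<Sum>y\<in>V. \<Sum>z\<in>V. if x\<noteq>y \<and> y\<noteq>z \<and> x\<noteq>z then aj x y z else 0) \<le> (real n - 1)\<^sup>2"
    if x: "x \<in> V" for x
  proof -
    define J where "J y = ind (y\<noteq>x)" for y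
    define D where "D y = ind (y\<noteq>x \<and> col x y = Purple \<and> dir y x) - ind (y\<noteq>x \<and> col x y = Purple \<and> dir x y)" for y
    have ajJD: "aj x y z = J y * J z - D y * D z" for y z unfolding aj_def J_def D_def by simp
    have "(\<Sum>y\<in>V. \<Sum>z\<in>V. if x\<noteq>y \<and> y\<noteq>z \<and> x\<noteq>z then aj x y z else 0) \<le> (\<Sum>y\<in>V. \<Sum>z\<in>V. aj x y z)"
      unfolding aj_def by (intro sum_mono) (auto simp: ind_def)
    also have "\<dots> = (\<Sum>y\<in>V. J y) * (\<Sum>z\<in>V. J z) - (\<Sum>y\<in>V. D y) * (\<Sum>z\<in>V. D z)"
      unfolding ajJD sum_product by (simp add: sum_subtractf)
    also have "(\<Sum>y\<in>V. J y) = real n - 1" unfolding J_def using sum_ne[OF fin x] n by (simp add: eq_commute)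
    finally have "(\<Sum>y\<in>V. \<Sum>z\<in>V. if x\<noteq>y \<and> y\<noteq>z \<and> x\<noteq>z then aj x y z else 0)
       \<le> (real n - 1) * (real n - 1) - (\<Sum>y\<in>V. D y) * (\<Sum>y\<in>V. D y)" .
    moreover have "0 \<le> (\<Sum>y\<in>V. D y) * (\<Sum>y\<in>V. D y)" by simp
    ultimately show ?thesis unfolding power2_eq_square by linarith
  qed
  have "(\<Sum>x\<in>V. \<Sum>y\<in>V. \<Sum>z\<in>V. if x\<noteq>y \<and> y\<noteq>z \<and> x\<noteq>z then W x y z else 0)
      \<le> 3 * real (card V) * (real n - 1)\<^sup>2 - 2 * (real (card V) * (real (card V) - 1) * (real (card V) - 2))"
  proof (rule angle_bound[OF fin])
    fix x y z assume "x\<in>V" "y\<in>V" "z\<in>V" "x\<noteq>y" "y\<noteq>z" "x\<noteq>z"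
    then show "W x y z \<le> aj x y z + aj y x z + aj z x y - 2"
      unfolding W_def P_def G_def aj_def by (rule joint_pt[OF vc])
  qed (rule loc)
  also have "\<dots> = real n * (real n - 1) * (real n + 1)" using n by (simp add: power2_eq_square algebra_simps)
  also have "\<dots> \<le> real n ^ 3" by (simp add: power3_eq_cube algebra_simps)
  finally show ?thesis using sumW Wd by simp
qed

definition aw :: "('a \<Rightarrow> 'a \<Rightarrow> colour) \<Rightarrow> ('a \<Rightarrow> 'a \<Rightarrow> bool) \<Rightarrow> 'a \<Rightarrow> 'a \<Rightarrow> 'a \<Rightarrow> real" where
  "aw col dir x y z =
    (let Jv = (\<lambda>y. ind (y\<noteq>x));
         Bv = (\<lambda>y. ind (y\<noteq>x \<and> col x y = Blue));
         Ov = (\<lambda>y. ind (y\<noteq>x \<and> col x y = Red \<and> dir x y));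
         Nv = (\<lambda>y. ind (y\<noteq>x \<and> (col x y = Green \<or> col x y = Purple)))
     in 93/200 * Jv y * Jv z - (31/200 * (Bv y + Nv y) * (Bv z + Nv z) + (-107/400) * Bv y * Ov z + (-107/400) * Ov y * Bv z
        + 93/400 * Nv y * Ov z + 93/400 * Ov y * Nv z + 93/200 * Ov y * Ov z))"

lemma cert_pt:
  assumes vc: "valid_colouring V col dir" and V: "x\<in>V" "y\<in>V" "z\<in>V" and d: "x\<noteq>y" "y\<noteq>z" "x\<noteq>z"
  shows "Kc col dir x y z + Kc col dir y x z + Kc col dir z x y
    \<le> aw col dir x y z + aw col dir y x z + aw col dir z x y - 93/100"
proof -
  have s: "col y x = col x y" "col z x = col x z" "col z y = col y z"
    using vc_sym[OF vc] V d by metis+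
  have p1: "col x y = Red \<Longrightarrow> dir y x = (\<not> dir x y)" using vc_red[OF vc V(1) V(2) d(1)] by simp
  have p2: "col x z = Red \<Longrightarrow> dir z x = (\<not> dir x z)" using vc_red[OF vc V(1) V(3) d(3)] by simp
  have p3: "col y z = Red \<Longrightarrow> dir z y = (\<not> dir y z)" using vc_red[OF vc V(2) V(3) d(2)] by simp
  show ?thesis
    unfolding aw_def Kc_def chr_def Let_def
    using d s p1 p2 p3
    by (cases "col x y"; cases "col x z"; cases "col y z"; cases "dir x y"; cases "dir x z"; cases "dir y z")
       (simp_all add: ind_def)
qed

lemma dsum_c: "(\<Sum>y\<in>V. \<Sum>z\<in>V. c * f y * g z) = c * (\<Sum>y\<in>V. f y) * (\<Sum>z\<in>V. (g z::real))"
proof -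
  have "c * (\<Sum>y\<in>V. f y) * (\<Sum>z\<in>V. g z) = (\<Sum>y\<in>V. c * f y) * (\<Sum>z\<in>V. g z)" by (simp add: sum_distrib_left)
  also have "\<dots> = (\<Sum>y\<in>V. \<Sum>z\<in>V. c * f y * g z)" by (rule sum_product)
  finally show ?thesis by simp
qed

lemma quad_cert:
  fixes b nn q :: real
  assumes "0 \<le> b" "0 \<le> nn" "0 \<le> q"
  shows "0 \<le> 31/200 * (b + nn) * (b + nn) + (-107/400) * b * q + (-107/400) * q * b
        + 93/400 * nn * q + 93/400 * q * nn + 93/200 * q * q"
proof -
  define S where "S = b + nn"
  have e: "124 * (31 * S * S - 107 * S * q + 93 * q * q) = (62 * S - 107 * q)\<^sup>2 + 83 * q * q"
    by (simp add: power2_eq_square algebra_simps)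
  have h0: "0 \<le> (62 * S - 107 * q)\<^sup>2 + 83 * q * q" using assms(3) by simp
  have "0 \<le> 124 * (31 * S * S - 107 * S * q + 93 * q * q)" by (subst e) (rule h0)
  then have q: "0 \<le> 31 * S * S - 107 * S * q + 93 * q * q" by (simp add: zero_le_mult_iff)
  have "0 \<le> nn * q" using assms by simp
  moreover have "31/200 * (b + nn) * (b + nn) + (-107/400) * b * q + (-107/400) * q * b
        + 93/400 * nn * q + 93/400 * q * nn + 93/200 * q * q
      = (31 * S * S - 107 * S * q + 93 * q * q) / 200 + nn * q"
    unfolding S_def by (simp add: field_simps)
  ultimately show ?thesis using q by simp
qed

lemma Tc_465:
  assumes fin: "finite V" and vc: "valid_colouring V col dir" and n: "card V = n"
  shows "real (T_c V col dir) \<le> 0.465 * real n ^ 3 / 6"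
proof -
  define K where "K = Kc col dir"
  define a where "a = aw col dir"
  have Wd: "6 * real (T_c V col dir) = (\<Sum>x\<in>V. \<Sum>y\<in>V. \<Sum>z\<in>V. if x\<noteq>y \<and> y\<noteq>z \<and> x\<noteq>z then K x y z + K y x z + K z x y else 0)"
    unfolding Tc_sum6[OF fin vc] K_def by (intro sum.cong refl) (auto simp: Kc_def ind_def)
  have loc: "(\<Sum>y\<in>V. \<Sum>z\<in>V. if x\<noteq>y \<and> y\<noteq>z \<and> x\<noteq>z then a x y z else 0) \<le> 93/200 * (real n - 1)\<^sup>2"
    if x: "x \<in> V" for x
  proof -
    define Jv where "Jv y = ind (y\<noteq>x)" for y
    define Bv where "Bv y = ind (y\<noteq>x \<and> col x y = Blue)" for y
    define Ov where "Ov y = ind (y\<noteq>x \<and> col x y = Red \<and> dir x y)" for y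
    define Nv where "Nv y = ind (y\<noteq>x \<and> (col x y = Green \<or> col x y = Purple))" for y
    define Q where "Q y z = 31/200 * (Bv y + Nv y) * (Bv z + Nv z) + (-107/400) * Bv y * Ov z + (-107/400) * Ov y * Bv z
        + 93/400 * Nv y * Ov z + 93/400 * Ov y * Nv z + 93/200 * Ov y * Ov z" for y z
    have aJQ: "a x y z = 93/200 * Jv y * Jv z - Q y z" for y z
      unfolding a_def aw_def Let_def Jv_def Bv_def Ov_def Nv_def Q_def by simp
    have nd: "0 \<le> a x y z" if "\<not> (x\<noteq>y \<and> y\<noteq>z \<and> x\<noteq>z)" for y z
      using that unfolding a_def aw_def Let_def
      by (cases "col x y"; cases "dir x y"; cases "dir y x") (auto simp: ind_def)
    have "(\<Sum>y\<in>V. \<Sum>z\<in>V. if x\<noteq>y \<and> y\<noteq>z \<and> x\<noteq>z then a x y z else 0) \<le> (\<Sum>y\<in>V. \<Sum>z\<in>V. a x y z)"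
      using nd by (intro sum_mono) auto
    also have "\<dots> = (\<Sum>y\<in>V. \<Sum>z\<in>V. 93/200 * Jv y * Jv z) - (\<Sum>y\<in>V. \<Sum>z\<in>V. Q y z)"
      unfolding aJQ by (simp add: sum_subtractf)
    also have "(\<Sum>y\<in>V. \<Sum>z\<in>V. 93/200 * Jv y * Jv z) = 93/200 * (real n - 1)\<^sup>2"
      unfolding dsum_c Jv_def using sum_ne[OF fin x] n by (simp add: eq_commute power2_eq_square)
    also have "(\<Sum>y\<in>V. \<Sum>z\<in>V. Q y z) = 31/200 * (sum Bv V + sum Nv V) * (sum Bv V + sum Nv V)
        + (-107/400) * sum Bv V * sum Ov V + (-107/400) * sum Ov V * sum Bv V
        + 93/400 * sum Nv V * sum Ov V + 93/400 * sum Ov V * sum Nv V + 93/200 * sum Ov V * sum Ov V"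
      unfolding Q_def by (simp only: sum.distrib dsum_c)
    finally have le: "(\<Sum>y\<in>V. \<Sum>z\<in>V. if x\<noteq>y \<and> y\<noteq>z \<and> x\<noteq>z then a x y z else 0) \<le> 93/200 * (real n - 1)\<^sup>2
       - (31/200 * (sum Bv V + sum Nv V) * (sum Bv V + sum Nv V)
        + (-107/400) * sum Bv V * sum Ov V + (-107/400) * sum Ov V * sum Bv V
        + 93/400 * sum Nv V * sum Ov V + 93/400 * sum Ov V * sum Nv V + 93/200 * sum Ov V * sum Ov V)" .
    have "0 \<le> 31/200 * (sum Bv V + sum Nv V) * (sum Bv V + sum Nv V)
        + (-107/400) * sum Bv V * sum Ov V + (-107/400) * sum Ov V * sum Bv V
        + 93/400 * sum Nv V * sum Ov V + 93/400 * sum Ov V * sum Nv V + 93/200 * sum Ov V * sum Ov V"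
      by (rule quad_cert) (auto simp: Bv_def Nv_def Ov_def intro!: sum_nonneg ind_ge0)
    then show ?thesis using le by linarith
  qed
  have "(\<Sum>x\<in>V. \<Sum>y\<in>V. \<Sum>z\<in>V. if x\<noteq>y \<and> y\<noteq>z \<and> x\<noteq>z then K x y z + K y x z + K z x y else 0)
      \<le> 3 * real (card V) * (93/200 * (real n - 1)\<^sup>2) - 93/100 * (real (card V) * (real (card V) - 1) * (real (card V) - 2))"
  proof (rule angle_bound[OF fin])
    fix x y z assume "x\<in>V" "y\<in>V" "z\<in>V" "x\<noteq>y" "y\<noteq>z" "x\<noteq>z"
    then show "K x y z + K y x z + K z x y \<le> a x y z + a y x z + a z x y - 93/100"
      unfolding K_def a_def by (rule cert_pt[OF vc])
  qed (rule loc)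
  also have "\<dots> = 93/200 * (real n * (real n - 1) * (real n + 1))" using n by (simp add: power2_eq_square field_simps)
  also have "\<dots> \<le> 93/200 * real n ^ 3" by (simp add: power3_eq_cube algebra_simps)
  finally show ?thesis using Wd by simp
qed

theorem corollary5p4:
  fixes V :: "'a set" and n :: nat and col :: "'a \<Rightarrow> 'a \<Rightarrow> colour"
    and dir :: "'a \<Rightarrow> 'a \<Rightarrow> bool" and \<alpha> \<beta> \<gamma> \<delta> :: real
  assumes "finite V" and "card V = n"
    and "valid_colouring V col dir"
    and "\<alpha> \<ge> 0" and "\<beta> \<ge> 0" and "\<gamma> \<ge> 0" and "\<delta> \<ge> 0"
    and "real (card (pairs_of_colour V col Red)) = 2 * \<alpha> * real (n choose 2)"
    and "real (card (pairs_of_colour V col Blue)) = \<beta> * real (n choose 2)"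
    and "real (card (pairs_of_colour V col Green)) = \<gamma> * real (n choose 2)"
    and "real (card (pairs_of_colour V col Purple)) = 2 * \<delta> * real (n choose 2)"
  shows "real (T_p V col dir + T_g V col + T_c V col dir)
           \<le> f_fun \<alpha> \<beta> \<gamma> \<delta> * real n ^ 3 / 6"
proof -
  note fin = assms(1) and n = assms(2) and vc = assms(3)
  define N where "N = real n ^ 3 / 6"
  have N0: "0 \<le> N" unfolding N_def by simp
  define Tp where "Tp = real (T_p V col dir)"
  define Tg where "Tg = real (T_g V col)"
  define Tc where "Tc = real (T_c V col dir)"
  define g where "g = g_fun \<alpha> \<beta> \<gamma>"
  have hg: "Tg \<le> \<gamma> powr (3/2) * N"
    using Tg_bound[OF fin vc n assms(6,10)] unfolding Tg_def N_def by simp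
  have hp: "Tp \<le> 2 * \<delta> powr (3/2) * N"
    using Tp_bound[OF fin vc n assms(7,11)] unfolding Tp_def N_def by simp
  have c1: "Tc \<le> 0.465 * N" using Tc_465[OF fin vc n] unfolding Tc_def N_def by simp
  have c2: "Tc \<le> (3 * hm \<alpha> \<beta>) * N" using Tc_hm[OF fin vc n assms(4,5,8,9)] unfolding Tc_def N_def by simp
  have c3: "Tc \<le> (3 * \<alpha> * sqrt \<beta>) * N" using Tc_sqrt[OF fin vc n assms(4,5,8,9)] unfolding Tc_def N_def by simp
  have hc: "Tc \<le> min 0.465 (min (3 * hm \<alpha> \<beta>) (3 * \<alpha> * sqrt \<beta>)) * N"
    using c1 c2 c3 by (auto simp: min_def)
  have hgc: "Tg + Tc \<le> g * N" using hg hc unfolding g_def g_fun_def by (simp add: algebra_simps)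
  have hj: "4 * Tp + Tg + Tc \<le> N" using joint_bound[OF fin vc n] unfolding Tp_def Tg_def Tc_def N_def by simp
  have A: "Tp + Tg + Tc \<le> (2 * \<delta> powr (3/2) + g) * N" using hp hgc by (simp add: algebra_simps)
  have B: "Tp + Tg + Tc \<le> (1/4 + 3/4 * g) * N" using hj hgc by (simp add: algebra_simps)
  have "Tp + Tg + Tc \<le> f_fun \<alpha> \<beta> \<gamma> \<delta> * N"
    using A B unfolding f_fun_def g_def[symmetric] by (auto simp: min_def)
  then show ?thesis unfolding Tp_def Tg_def Tc_def N_def by simp
qed

end
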